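(* The $\mathcal R_b$-algebra homomorphism $\Phi_\infty:\mathcal K_\infty\to\operatorname{Fun}(W_\infty,\mathcal R_b)$, $f\mapsto(v\mapsto\Phi_v(f))$, is injective.
   Context: Grading $\deg x_i=\deg a_i=\deg b_i=1$, $\deg\beta=-1$; $R[[\cdots]]_{\mathrm{gr}}$ = finite sums of homogeneous formal power series. $\bar u=-u/(1+\beta u)$. $G\Gamma\subset\mathbb Q[\beta][[x_1,x_2,\dots]]_{\mathrm{gr}}$: series symmetric in the $x_i$ with $f(t,\bar t,x_3,\dots)=f(0,0,x_3,\dots)$. $\mathcal R_a=\bigcup_m\mathbb Q[\beta][[a_1,\dots,a_m]]_{\mathrm{gr}}$, $\mathcal R_b=\bigcup_m\mathbb Q[\beta][[b_1,\dots,b_m]]_{\mathrm{gr}}$, $\mathcal K_\infty=G\Gamma\otimes_{\mathbb Q[\beta]}\mathcal R_a\otimes_{\mathbb Q[\beta]}\mathcal R_b$. $W_\infty$: permutations $w$ of $\mathbb Z\setminus\{0\}$ moving finitely many elements with $w(-i)=-w(i)$. Put $b_{-j}:=\bar b_j$ (so $\bar b_{-j}=b_j$). For $v\in W_\infty$, $\Phi_v$ is the $\mathcal R_b$-algebra homomorphism $x_i\mapsto b_{v(i)}$ if $v(i)<0$, $x_i\mapsto0$ if $v(i)>0$, $a_i\mapsto\bar b_{v(i)}$. $\operatorname{Fun}(W_\infty,\mathcal R_b)$ has pointwise operations. *)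

theory Defs
  imports "HOL-Library.Poly_Mapping" "HOL-Computational_Algebra.Polynomial"
          "HOL-Combinatorics.Permutations"
begin

text \<open>Variables. Indices i >= 1 are the genuine variables x_i, a_i, b_i;
  the index 0 variable X 0 is only used as the auxiliary variable t in the
  definition of G Gamma.\<close>
datatype var = X nat | A nat | B nat

type_synonym mon = "var \<Rightarrow>\<^sub>0 nat"

type_synonym ser = "mon \<Rightarrow> rat poly"

definition beta :: "rat poly" where "beta = [:0, 1:]"

definition mdeg :: "mon \<Rightarrow> nat" where
  "mdeg m = (\<Sum>v\<in>Poly_Mapping.keys m. Poly_Mapping.lookup m v)"

definition ser_zero :: ser where "ser_zero = (\<lambda>_. 0)"
definition ser_one :: ser where "ser_one = (\<lambda>n. if n = 0 then 1 else 0)"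
definition ser_var :: "var \<Rightarrow> ser" where
  "ser_var w = (\<lambda>n. if n = Poly_Mapping.single w 1 then 1 else 0)"
definition ser_add :: "ser \<Rightarrow> ser \<Rightarrow> ser" where
  "ser_add f g = (\<lambda>n. f n + g n)"
definition ser_mul :: "ser \<Rightarrow> ser \<Rightarrow> ser" where
  "ser_mul f g = (\<lambda>n. \<Sum>(p, q)\<in>{(p, q). p + q = n}. f p * g q)"

primrec ser_pow :: "ser \<Rightarrow> nat \<Rightarrow> ser" where
  "ser_pow f 0 = ser_one"
| "ser_pow f (Suc k) = ser_mul f (ser_pow f k)"

definition mono_img :: "(var \<Rightarrow> ser) \<Rightarrow> mon \<Rightarrow> ser" where
  "mono_img \<sigma> m = Finite_Set.fold (\<lambda>v acc. ser_mul (ser_pow (\<sigma> v) (Poly_Mapping.lookup m v)) acc) ser_one (Poly_Mapping.keys m)"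

text \<open>Substitution homomorphism: every variable w is replaced by the series sigma w.
  (Used only where each coefficient of the result is a finite sum.)\<close>
definition subst :: "(var \<Rightarrow> ser) \<Rightarrow> ser \<Rightarrow> ser" where
  "subst \<sigma> f = (\<lambda>n. \<Sum>m\<in>{m. f m \<noteq> 0 \<and> mono_img \<sigma> m n \<noteq> 0}. f m * mono_img \<sigma> m n)"

text \<open>\<open>ubar w\<close> is the series  -u/(1+beta u) = sum_{k>=1} (-1)^k beta^(k-1) u^k  with u = w.\<close>
definition ubar :: "var \<Rightarrow> ser" where
  "ubar w = (\<lambda>n. if n \<noteq> 0 \<and> Poly_Mapping.keys n \<subseteq> {w}
                 then Polynomial.monom ((-1) ^ Poly_Mapping.lookup n w) (Poly_Mapping.lookup n w - 1) else 0)"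

section \<open>Grading: deg x = deg a = deg b = 1, deg beta = -1\<close>

definition homogeneous :: "int \<Rightarrow> ser \<Rightarrow> bool" where
  "homogeneous d f \<longleftrightarrow> (\<forall>m k. coeff (f m) k \<noteq> 0 \<longrightarrow> int (mdeg m) - int k = d)"

definition graded :: "ser \<Rightarrow> bool" where
  "graded f \<longleftrightarrow> (\<exists>D g. finite D \<and> (\<forall>d\<in>D. homogeneous d (g d)) \<and>
                        f = (\<lambda>n. \<Sum>d\<in>D. g d n))"

definition only_vars :: "var set \<Rightarrow> ser \<Rightarrow> bool" where
  "only_vars S f \<longleftrightarrow> (\<forall>m. f m \<noteq> 0 \<longrightarrow> Poly_Mapping.keys m \<subseteq> S)"

definition Ser_x :: "ser set" where
  "Ser_x = {f. graded f \<and> only_vars {X i | i. i \<ge> 1} f}"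

definition symmetric_x :: "ser \<Rightarrow> bool" where
  "symmetric_x f \<longleftrightarrow> (\<forall>\<pi>. \<pi> permutes {1..} \<longrightarrow>
      subst (\<lambda>w. case w of X i \<Rightarrow> ser_var (X (\<pi> i)) | _ \<Rightarrow> ser_var w) f = f)"

text \<open>G Gamma: symmetric series with f(t, tbar, x_3, ...) = f(0, 0, x_3, ...);
  the auxiliary variable t is X 0.\<close>
definition GGamma :: "ser set" where
  "GGamma = {f. f \<in> Ser_x \<and> symmetric_x f \<and>
     subst (\<lambda>w. if w = X 1 then ser_var (X 0) else if w = X 2 then ubar (X 0) else ser_var w) f
   = subst (\<lambda>w. if w = X 1 \<or> w = X 2 then ser_zero else ser_var w) f}"

definition R_a :: "ser set" where
  "R_a = {f. \<exists>M. graded f \<and> only_vars {A i | i. 1 \<le> i \<and> i \<le> M} f}"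

definition R_b :: "ser set" where
  "R_b = {f. \<exists>M. graded f \<and> only_vars {B i | i. 1 \<le> i \<and> i \<le> M} f}"

text \<open>K_infinity, realised inside the ring of power series in x, a, b as the set of
  finite sums of products f * g * h with f in G Gamma, g in R_a, h in R_b.\<close>
definition K_inf :: "ser set" where
  "K_inf = {F. \<exists>(n::nat) f g h. (\<forall>k<n. f k \<in> GGamma \<and> g k \<in> R_a \<and> h k \<in> R_b) \<and>
               F = (\<lambda>mm. \<Sum>k<n. ser_mul (ser_mul (f k) (g k)) (h k) mm)}"

definition W_inf :: "(int \<Rightarrow> int) set" where
  "W_inf = {v. bij_betw v (- {0}) (- {0}) \<and> finite {i. v i \<noteq> i} \<and> (\<forall>i. v (- i) = - v i)}"

text \<open>b_j for j a nonzero integer, with b_{-j} = bbar_j\<close>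
definition bvar :: "int \<Rightarrow> ser" where
  "bvar j = (if j > 0 then ser_var (B (nat j)) else ubar (B (nat (- j))))"

text \<open>bbar_j for j a nonzero integer, with bbar_{-j} = b_j\<close>
definition bbar :: "int \<Rightarrow> ser" where
  "bbar j = (if j > 0 then ubar (B (nat j)) else ser_var (B (nat (- j))))"

definition Phi_assign :: "(int \<Rightarrow> int) \<Rightarrow> var \<Rightarrow> ser" where
  "Phi_assign v w = (case w of
      X i \<Rightarrow> (if v (int i) < 0 then bvar (v (int i)) else ser_zero)
    | A i \<Rightarrow> bbar (v (int i))
    | B j \<Rightarrow> ser_var (B j))"

definition Phi :: "(int \<Rightarrow> int) \<Rightarrow> ser \<Rightarrow> ser" where
  "Phi v f = subst (Phi_assign v) f"

end

theory Submission
  imports Defs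
begin


definition Dn :: "mon \<Rightarrow> mon set" where
  "Dn n = {p. \<forall>k. Poly_Mapping.lookup p k \<le> Poly_Mapping.lookup n k}"

lemma finite_Dn: "finite (Dn n)"
proof -
  let ?B = "{0..Max (insert 0 (Poly_Mapping.lookup n ` Poly_Mapping.keys n))}"
  have "Poly_Mapping.lookup ` Dn n \<subseteq> {f. \<forall>x. (x \<in> Poly_Mapping.keys n \<longrightarrow> f x \<in> ?B) \<and> (x \<notin> Poly_Mapping.keys n \<longrightarrow> f x = 0)}"
  proof (clarsimp simp: Dn_def, intro conjI allI impI)
    fix p x assume h: "\<forall>k. Poly_Mapping.lookup p k \<le> Poly_Mapping.lookup n k" "x \<in> Poly_Mapping.keys n"
    have "Poly_Mapping.lookup n x \<le> Max (insert 0 (Poly_Mapping.lookup n ` Poly_Mapping.keys n))"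
      using h(2) by (intro Max_ge) auto
    then show "Poly_Mapping.lookup p x \<le> Max (insert 0 (Poly_Mapping.lookup n ` Poly_Mapping.keys n))"
      using h(1) le_trans by blast
  next
    fix p x assume h: "\<forall>k. Poly_Mapping.lookup p k \<le> Poly_Mapping.lookup n k" "x \<notin> Poly_Mapping.keys n"
    then show "Poly_Mapping.lookup p x = 0"
      by (metis le_zero_eq not_in_keys_iff_lookup_eq_zero)
  qed
  moreover have "finite {f. \<forall>x. (x \<in> Poly_Mapping.keys n \<longrightarrow> f x \<in> ?B) \<and> (x \<notin> Poly_Mapping.keys n \<longrightarrow> f x = (0::nat))}"
    by (rule finite_set_of_finite_funs) auto
  ultimately have "finite (Poly_Mapping.lookup ` Dn n)" by (rule finite_subset)
  then show ?thesis
    using finite_imageD inj_on_def poly_mapping_eqI by (metis (no_types, lifting) poly_mapping.lookup_inject)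
qed

lemma Dn_iff: "p \<in> Dn n \<longleftrightarrow> (\<exists>q. n = p + q)"
proof
  assume "p \<in> Dn n"
  then have "n = p + (n - p)"
    by (intro poly_mapping_eqI) (simp add: Dn_def lookup_add lookup_minus)
  then show "\<exists>q. n = p + q" by blast
next
  assume "\<exists>q. n = p + q" then show "p \<in> Dn n" by (auto simp: Dn_def lookup_add)
qed

lemma Dn_add: "p \<in> Dn n \<Longrightarrow> p + (n - p) = n"
  by (intro poly_mapping_eqI) (simp add: Dn_def lookup_add lookup_minus)

lemma add_minus_cancel_pm: "((p::mon) + q) - p = q"
  by (intro poly_mapping_eqI) (simp add: lookup_add lookup_minus)

lemma ser_mul_alt: "ser_mul f g n = (\<Sum>p\<in>Dn n. f p * g (n - p))"
  unfolding ser_mul_def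
  by (rule sum.reindex_bij_witness[where i="\<lambda>p. (p, n - p)" and j="fst"])
     (auto simp: add_minus_cancel_pm Dn_add Dn_iff)

lemma ser_mul_comm: "ser_mul f g = ser_mul g f"
proof
  fix n show "ser_mul f g n = ser_mul g f n"
    unfolding ser_mul_def
    by (rule sum.reindex_bij_witness[where i="\<lambda>(p,q). (q,p)" and j="\<lambda>(p,q). (q,p)"]) (auto simp: add.commute mult.commute)
qed

lemma ser_mul_assoc: "ser_mul (ser_mul f g) h = ser_mul f (ser_mul g h)"
proof
  fix n
  have "ser_mul (ser_mul f g) h n = (\<Sum>s\<in>Dn n. \<Sum>p\<in>Dn s. f p * g (s - p) * h (n - s))"
    by (simp add: ser_mul_alt sum_distrib_right)
  also have "\<dots> = (\<Sum>(s,p)\<in>Sigma (Dn n) Dn. f p * g (s - p) * h (n - s))"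
    by (rule sum.Sigma) (auto simp: finite_Dn)
  also have "\<dots> = (\<Sum>(p,r)\<in>Sigma (Dn n) (\<lambda>p. Dn (n - p)). f p * (g r * h (n - p - r)))"
  proof (rule sum.reindex_bij_witness[where i="\<lambda>(p,r). (p + r, p)" and j="\<lambda>(s,p). (p, s - p)"])
    fix a assume "a \<in> Sigma (Dn n) (\<lambda>p. Dn (n - p))"
    then show "(case (case a of (p, r) \<Rightarrow> (p + r, p)) of (s, p) \<Rightarrow> (p, s - p)) = a"
      by (auto simp: add_minus_cancel_pm)
  next
    fix a assume "a \<in> Sigma (Dn n) (\<lambda>p. Dn (n - p))"
    then show "(case a of (p, r) \<Rightarrow> (p + r, p)) \<in> Sigma (Dn n) Dn"
      by (auto simp: Dn_def lookup_add lookup_minus) (metis le_diff_conv2 add.commute)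
  next
    fix b assume "b \<in> Sigma (Dn n) Dn"
    then show "(case (case b of (s, p) \<Rightarrow> (p, s - p)) of (p, r) \<Rightarrow> (p + r, p)) = b"
      by (auto simp: Dn_add)
  next
    fix b assume "b \<in> Sigma (Dn n) Dn"
    then show "(case b of (s, p) \<Rightarrow> (p, s - p)) \<in> Sigma (Dn n) (\<lambda>p. Dn (n - p))"
      apply (auto simp: Dn_def lookup_minus)
      apply (meson le_trans)
      by (simp add: diff_le_mono)
  next
    fix a assume a: "a \<in> Sigma (Dn n) Dn"
    have eq: "n - p - (s - p) = n - s" if "p \<in> Dn s" "s \<in> Dn n" for s p :: mon
      using that by (intro poly_mapping_eqI) (auto simp: lookup_add lookup_minus Dn_def)
    show "(case (case a of (s, p) \<Rightarrow> (p, s - p)) of (p, r) \<Rightarrow> f p * (g r * h (n - p - r))) =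
         (case a of (s, p) \<Rightarrow> f p * g (s - p) * h (n - s))"
      using a by (cases a) (simp add: mult.assoc eq)
  qed
  also have "\<dots> = (\<Sum>p\<in>Dn n. \<Sum>r\<in>Dn (n - p). f p * (g r * h (n - p - r)))"
    by (rule sum.Sigma[symmetric]) (auto simp: finite_Dn)
  also have "\<dots> = ser_mul f (ser_mul g h) n"
    by (simp add: ser_mul_alt sum_distrib_left)
  finally show "ser_mul (ser_mul f g) h n = ser_mul f (ser_mul g h) n" .
qed

lemma ser_mul_lcomm: "ser_mul a (ser_mul b c) = ser_mul b (ser_mul a c)"
  by (metis ser_mul_assoc ser_mul_comm)

lemma ser_mul_zero: "ser_mul ser_zero f = ser_zero"
  by (auto simp: ser_mul_def ser_zero_def)



definition addcl :: "mon set \<Rightarrow> bool" where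
  "addcl C \<longleftrightarrow> 0 \<in> C \<and> (\<forall>a\<in>C. \<forall>b\<in>C. a + b \<in> C)"

definition lowC :: "mon set \<Rightarrow> ser \<Rightarrow> mon \<Rightarrow> rat poly \<Rightarrow> bool" where
  "lowC C s e c \<longleftrightarrow> (\<forall>n. s n \<noteq> 0 \<longrightarrow> (\<exists>d\<in>C. n = e + d)) \<and> s e = c"

lemma pairs_eq: "{(p, q). p + q = (n::mon)} = (\<lambda>p. (p, n - p)) ` Dn n"
  by (auto simp: Dn_iff add_minus_cancel_pm image_iff)

lemma finite_pairs: "finite {(p, q). p + q = (n::mon)}"
  by (simp add: pairs_eq finite_Dn)

lemma pm_add_eq_zero: "(a::mon) + b = 0 \<Longrightarrow> a = 0"
  by (metis add_is_0 lookup_add lookup_zero poly_mapping_eqI)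

lemma pm_add_left_cancel: "(a::mon) + b = a + c \<Longrightarrow> b = c"
  by simp

lemma lowC_one: "addcl C \<Longrightarrow> lowC C ser_one 0 1"
  by (auto simp: lowC_def ser_one_def addcl_def)

lemma lowC_mul:
  assumes C: "addcl C" and f: "lowC C f e1 c1" and g: "lowC C g e2 c2"
  shows "lowC C (ser_mul f g) (e1 + e2) (c1 * c2)"
  unfolding lowC_def
proof (intro conjI allI impI)
  fix n assume "ser_mul f g n \<noteq> 0"
  then obtain p q where pq: "p + q = n" "f p \<noteq> 0" "g q \<noteq> 0"
    unfolding ser_mul_def by (auto elim!: sum.not_neutral_contains_not_neutral)
  from f pq(2) obtain d1 where "d1 \<in> C" "p = e1 + d1" by (auto simp: lowC_def)
  moreover from g pq(3) obtain d2 where "d2 \<in> C" "q = e2 + d2" by (auto simp: lowC_def)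
  ultimately show "\<exists>d\<in>C. n = e1 + e2 + d"
    using C pq(1) by (intro bexI[of _ "d1 + d2"]) (auto simp: addcl_def add_ac)
next
  have "ser_mul f g (e1 + e2) = (\<Sum>(p, q)\<in>{(e1, e2)}. f p * g q)"
    unfolding ser_mul_def
  proof (rule sum.mono_neutral_right[OF finite_pairs])
    show "{(e1, e2)} \<subseteq> {(p, q). p + q = e1 + e2}" by auto
    show "\<forall>i\<in>{(p, q). p + q = e1 + e2} - {(e1, e2)}. (case i of (p, q) \<Rightarrow> f p * g q) = 0"
    proof
      fix i assume i0: "i \<in> {(p, q). p + q = e1 + e2} - {(e1, e2)}"
      obtain p q where i: "i = (p, q)" by (cases i)
      with i0 have pq: "p + q = e1 + e2" "\<not> (p = e1 \<and> q = e2)" by auto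
      have "f p = 0 \<or> g q = 0"
      proof (rule ccontr)
        assume "\<not> (f p = 0 \<or> g q = 0)"
        then have "f p \<noteq> 0" "g q \<noteq> 0" by auto
        then obtain d1 d2 where "p = e1 + d1" "q = e2 + d2"
          using f g unfolding lowC_def by blast
        with pq have "(e1 + e2) + (d1 + d2) = (e1 + e2) + 0" by (simp add: add_ac)
        then have "d1 + d2 = 0" by (rule add_left_imp_eq)
        then have "d1 = 0" "d2 = 0" using pm_add_eq_zero[of d1 d2] pm_add_eq_zero[of d2 d1] by (auto simp: add.commute)
        with pq \<open>p = e1 + d1\<close> \<open>q = e2 + d2\<close> show False by simp
      qed
      then show "(case i of (p, q) \<Rightarrow> f p * g q) = 0" using i by auto
    qed
  qed
  then show "ser_mul f g (e1 + e2) = c1 * c2" using f g by (simp add: lowC_def)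
qed

lemma lowC_pow:
  assumes C: "addcl C" and f: "lowC C f (Poly_Mapping.single w 1) c"
  shows "lowC C (ser_pow f k) (Poly_Mapping.single w k) (c ^ k)"
proof (induction k)
  case 0 then show ?case using lowC_one[OF C] by simp
next
  case (Suc k)
  have "Poly_Mapping.single w (Suc k) = Poly_Mapping.single w 1 + Poly_Mapping.single w k"
    by (metis plus_1_eq_Suc single_add)
  then show ?case using lowC_mul[OF C f Suc] by simp
qed

lemma cfc: "comp_fun_commute_on UNIV (\<lambda>v acc. ser_mul (P v) acc)"
  by standard (auto simp: fun_eq_iff ser_mul_lcomm)

lemma mono_img_fold_insert:
  assumes "finite Bs" "w \<notin> Bs"
  shows "Finite_Set.fold (\<lambda>v acc. ser_mul (ser_pow (\<sigma> v) (Poly_Mapping.lookup m v)) acc) ser_one (insert w Bs)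
       = ser_mul (ser_pow (\<sigma> w) (Poly_Mapping.lookup m w))
           (Finite_Set.fold (\<lambda>v acc. ser_mul (ser_pow (\<sigma> v) (Poly_Mapping.lookup m v)) acc) ser_one Bs)"
  by (rule comp_fun_commute_on.fold_insert[OF cfc[of "\<lambda>v. ser_pow (\<sigma> v) (Poly_Mapping.lookup m v)"]])
     (use assms in auto)

lemma mono_img_low:
  assumes C: "addcl C" and low: "\<And>w. w \<in> Poly_Mapping.keys m \<Longrightarrow> lowC C (\<sigma> w) (Poly_Mapping.single (\<tau> w) 1) (c w)"
  shows "lowC C (mono_img \<sigma> m) (\<Sum>w\<in>Poly_Mapping.keys m. Poly_Mapping.single (\<tau> w) (Poly_Mapping.lookup m w))
            (\<Prod>w\<in>Poly_Mapping.keys m. c w ^ Poly_Mapping.lookup m w)"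
proof -
  have "Bs \<subseteq> Poly_Mapping.keys m \<Longrightarrow>
    lowC C (Finite_Set.fold (\<lambda>v acc. ser_mul (ser_pow (\<sigma> v) (Poly_Mapping.lookup m v)) acc) ser_one Bs)
       (\<Sum>w\<in>Bs. Poly_Mapping.single (\<tau> w) (Poly_Mapping.lookup m w))
            (\<Prod>w\<in>Bs. c w ^ Poly_Mapping.lookup m w)" for Bs
  proof (induction Bs rule: infinite_finite_induct)
    case (infinite A)
    then show ?case by (meson finite_keys finite_subset)
  next
    case empty
    show ?case unfolding Finite_Set.fold_empty sum.empty prod.empty by (rule lowC_one[OF C])
  next
    case (insert w Bs)
    have wk: "w \<in> Poly_Mapping.keys m" "Bs \<subseteq> Poly_Mapping.keys m" using insert.prems by auto
    have IH: "lowC C (Finite_Set.fold (\<lambda>v acc. ser_mul (ser_pow (\<sigma> v) (Poly_Mapping.lookup m v)) acc) ser_one Bs)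
       (\<Sum>w\<in>Bs. Poly_Mapping.single (\<tau> w) (Poly_Mapping.lookup m w))
            (\<Prod>w\<in>Bs. c w ^ Poly_Mapping.lookup m w)" by (rule insert.IH[OF wk(2)])
    have L: "lowC C (ser_pow (\<sigma> w) (Poly_Mapping.lookup m w)) (Poly_Mapping.single (\<tau> w) (Poly_Mapping.lookup m w)) (c w ^ Poly_Mapping.lookup m w)"
      by (rule lowC_pow[OF C low[OF wk(1)]])
    have e1: "Finite_Set.fold (\<lambda>v acc. ser_mul (ser_pow (\<sigma> v) (Poly_Mapping.lookup m v)) acc) ser_one (insert w Bs)
       = ser_mul (ser_pow (\<sigma> w) (Poly_Mapping.lookup m w))
           (Finite_Set.fold (\<lambda>v acc. ser_mul (ser_pow (\<sigma> v) (Poly_Mapping.lookup m v)) acc) ser_one Bs)"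
      by (rule mono_img_fold_insert) (use insert.hyps in auto)
    have e2: "(\<Sum>w\<in>insert w Bs. Poly_Mapping.single (\<tau> w) (Poly_Mapping.lookup m w)) =
       Poly_Mapping.single (\<tau> w) (Poly_Mapping.lookup m w) + (\<Sum>w\<in>Bs. Poly_Mapping.single (\<tau> w) (Poly_Mapping.lookup m w))"
      by (rule sum.insert) (use insert.hyps in auto)
    have e3: "(\<Prod>w\<in>insert w Bs. c w ^ Poly_Mapping.lookup m w) = c w ^ Poly_Mapping.lookup m w * (\<Prod>w\<in>Bs. c w ^ Poly_Mapping.lookup m w)"
      by (rule prod.insert) (use insert.hyps in auto)
    show ?case unfolding e1 e2 e3 by (rule lowC_mul[OF C L IH])
  qed
  from this[OF order_refl] show ?thesis unfolding mono_img_def .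
qed

lemma mono_img_zero:
  assumes "w \<in> Poly_Mapping.keys m" "\<sigma> w = ser_zero"
  shows "mono_img \<sigma> m = ser_zero"
proof -
  have "Poly_Mapping.lookup m w \<noteq> 0" using assms(1) by (simp add: in_keys_iff)
  then obtain k where k: "Poly_Mapping.lookup m w = Suc k" by (cases "Poly_Mapping.lookup m w") auto
  have "mono_img \<sigma> m = ser_mul (ser_pow (\<sigma> w) (Poly_Mapping.lookup m w))
           (Finite_Set.fold (\<lambda>v acc. ser_mul (ser_pow (\<sigma> v) (Poly_Mapping.lookup m v)) acc) ser_one (Poly_Mapping.keys m - {w}))"
    unfolding mono_img_def
    by (rule comp_fun_commute_on.fold_rec[OF cfc[of "\<lambda>v. ser_pow (\<sigma> v) (Poly_Mapping.lookup m v)"]])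
       (use assms(1) in auto)
  then show ?thesis using k assms(2) by (simp add: ser_mul_zero)
qed

lemma lowC_var: "addcl C \<Longrightarrow> lowC C (ser_var w) (Poly_Mapping.single w 1) 1"
  by (auto simp: lowC_def ser_var_def addcl_def)

lemma single_one_nz: "Poly_Mapping.single w (1::nat) \<noteq> 0"
  by (metis lookup_single_eq lookup_zero one_neq_zero)

lemma pc_m1: "[:- 1:] = (- 1 :: rat poly)"
  by (simp add: one_pCons)

lemma lowC_ubar: "lowC UNIV (ubar w) (Poly_Mapping.single w 1) (-1)"
  unfolding lowC_def
proof (intro conjI allI impI)
  fix n assume "ubar w n \<noteq> 0"
  then have n: "n \<noteq> 0" "Poly_Mapping.keys n \<subseteq> {w}" by (auto simp: ubar_def split: if_splits)
  then have "n = Poly_Mapping.single w (Poly_Mapping.lookup n w)"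
    by (intro poly_mapping_eqI) (auto simp: lookup_single when_def in_keys_iff)
  moreover have "Poly_Mapping.lookup n w \<noteq> 0" using n
    by (metis calculation single_zero)
  ultimately have "n = Poly_Mapping.single w 1 + Poly_Mapping.single w (Poly_Mapping.lookup n w - 1)"
    by (metis One_nat_def Suc_pred' not_gr_zero plus_1_eq_Suc single_add)
  then show "\<exists>d\<in>UNIV. n = Poly_Mapping.single w 1 + d" by blast
next
  show "ubar w (Poly_Mapping.single w 1) = - 1"
    using single_one_nz[of w] by (simp add: ubar_def monom_0 pc_m1)
qed



definition rho :: "(nat \<Rightarrow> nat) \<Rightarrow> var \<Rightarrow> var" where
  "rho \<pi> w = (case w of X i \<Rightarrow> X (\<pi> i) | _ \<Rightarrow> w)"

definition ren :: "(nat \<Rightarrow> nat) \<Rightarrow> mon \<Rightarrow> mon" where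
  "ren \<pi> m = (\<Sum>w\<in>Poly_Mapping.keys m. Poly_Mapping.single (rho \<pi> w) (Poly_Mapping.lookup m w))"

definition invol :: "(nat \<Rightarrow> nat) \<Rightarrow> bool" where
  "invol \<pi> \<longleftrightarrow> (\<forall>i. \<pi> (\<pi> i) = i)"

lemma rho_invol: "invol \<pi> \<Longrightarrow> rho \<pi> (rho \<pi> w) = w"
  by (cases w) (auto simp: rho_def invol_def)

lemma rho_eq_iff: "invol \<pi> \<Longrightarrow> rho \<pi> w = y \<longleftrightarrow> w = rho \<pi> y"
  using rho_invol by metis

lemma lookup_ren: assumes "invol \<pi>"
  shows "Poly_Mapping.lookup (ren \<pi> m) y = Poly_Mapping.lookup m (rho \<pi> y)"
proof -
  have "Poly_Mapping.lookup (ren \<pi> m) y = (\<Sum>w\<in>Poly_Mapping.keys m. if w = rho \<pi> y then Poly_Mapping.lookup m w else 0)"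
    unfolding ren_def lookup_sum
    by (intro sum.cong) (auto simp: lookup_single when_def rho_eq_iff[OF assms])
  also have "\<dots> = Poly_Mapping.lookup m (rho \<pi> y)"
    by (simp add: in_keys_iff)
  finally show ?thesis .
qed

lemma ren_ren: "invol \<pi> \<Longrightarrow> ren \<pi> (ren \<pi> m) = m"
  by (intro poly_mapping_eqI) (simp add: lookup_ren rho_invol)

lemma ren_add: "invol \<pi> \<Longrightarrow> ren \<pi> (a + b) = ren \<pi> a + ren \<pi> b"
  by (intro poly_mapping_eqI) (simp add: lookup_ren lookup_add)

lemma ren_eq_iff: "invol \<pi> \<Longrightarrow> ren \<pi> m = n \<longleftrightarrow> m = ren \<pi> n"
  using ren_ren by metis

lemma ren_noX: assumes "invol \<pi>" "\<forall>w\<in>Poly_Mapping.keys m. \<forall>i. w \<noteq> X i"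
  shows "ren \<pi> m = m"
proof (intro poly_mapping_eqI)
  have z: "Poly_Mapping.lookup m (X i) = 0" for i using assms(2) by (metis in_keys_iff)
  fix y show "Poly_Mapping.lookup (ren \<pi> m) y = Poly_Mapping.lookup m y"
    using assms by (cases y) (auto simp: lookup_ren rho_def z)
qed

lemma only_vars_ren:
  assumes "invol \<pi>" "only_vars S g" "\<forall>i. X i \<notin> S"
  shows "g (ren \<pi> m) = g m"
proof (cases "g m = 0")
  case False
  then have "ren \<pi> m = m" using assms by (intro ren_noX) (auto simp: only_vars_def)
  then show ?thesis by simp
next
  case True
  show ?thesis
  proof (rule ccontr)
    assume "g (ren \<pi> m) \<noteq> g m"
    then have "g (ren \<pi> m) \<noteq> 0" using True by simp
    then have "ren \<pi> (ren \<pi> m) = ren \<pi> m" using assms by (intro ren_noX) (auto simp: only_vars_def)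
    then have "ren \<pi> m = m" using ren_ren[OF assms(1)] by simp
    then show False using \<open>g (ren \<pi> m) \<noteq> g m\<close> by simp
  qed
qed

lemma ser_mul_ren:
  assumes "invol \<pi>" "\<And>p. f (ren \<pi> p) = f p" "\<And>p. g (ren \<pi> p) = g p"
  shows "ser_mul f g (ren \<pi> n) = ser_mul f g n"
  unfolding ser_mul_def
  by (rule sum.reindex_bij_witness[where i="\<lambda>(p,q). (ren \<pi> p, ren \<pi> q)" and j="\<lambda>(p,q). (ren \<pi> p, ren \<pi> q)"])
     (auto simp: ren_ren[OF assms(1)] ren_add[OF assms(1), symmetric] assms(2,3))

lemma sym_coeff:
  assumes "invol \<pi>" and fs: "subst (\<lambda>w. case w of X i \<Rightarrow> ser_var (X (\<pi> i)) | _ \<Rightarrow> ser_var w) f = f"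
  shows "f (ren \<pi> n) = f n"
proof -
  let ?\<sigma> = "\<lambda>w. case w of X i \<Rightarrow> ser_var (X (\<pi> i)) | _ \<Rightarrow> ser_var w"
  have \<sigma>: "?\<sigma> w = ser_var (rho \<pi> w)" for w by (cases w) (auto simp: rho_def)
  have C0: "addcl {0}" by (simp add: addcl_def)
  have low: "lowC {0} (mono_img ?\<sigma> m) (ren \<pi> m) 1" for m
    using mono_img_low[OF C0, of m ?\<sigma> "rho \<pi>" "\<lambda>_. 1"] lowC_var[OF C0] unfolding \<sigma> ren_def
    by simp
  have img: "mono_img ?\<sigma> m k = (if k = ren \<pi> m then 1 else 0)" for m k
    using low[of m] unfolding lowC_def by (cases "k = ren \<pi> m") auto
  have "subst ?\<sigma> f n = (\<Sum>m\<in>{m. f m \<noteq> 0 \<and> m = ren \<pi> n}. f m)"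
    unfolding subst_def img by (intro sum.cong) (auto simp: ren_eq_iff[OF assms(1)] ren_ren[OF assms(1)])
  also have "\<dots> = f (ren \<pi> n)"
  proof (cases "f (ren \<pi> n) = 0")
    case True
    then have "{m. f m \<noteq> 0 \<and> m = ren \<pi> n} = {}" by auto
    then show ?thesis using True by simp
  next
    case False
    then have "{m. f m \<noteq> 0 \<and> m = ren \<pi> n} = {ren \<pi> n}" by auto
    then show ?thesis by simp
  qed
  finally have "subst ?\<sigma> f n = f (ren \<pi> n)" .
  then show ?thesis using fs by simp
qed



lemma only_vars_mono: "only_vars S f \<Longrightarrow> S \<subseteq> T \<Longrightarrow> only_vars T f"
  unfolding only_vars_def by blast

lemma only_vars_mul:
  assumes "only_vars S f" "only_vars T g"
  shows "only_vars (S \<union> T) (ser_mul f g)"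
  unfolding only_vars_def
proof (intro allI impI)
  fix n assume "ser_mul f g n \<noteq> 0"
  then obtain p q where pq: "p + q = n" "f p \<noteq> 0" "g q \<noteq> 0"
    unfolding ser_mul_def by (auto elim!: sum.not_neutral_contains_not_neutral)
  have "Poly_Mapping.keys p \<subseteq> S" "Poly_Mapping.keys q \<subseteq> T"
    using assms pq(2,3) unfolding only_vars_def by auto
  moreover have "Poly_Mapping.keys n \<subseteq> Poly_Mapping.keys p \<union> Poly_Mapping.keys q"
    using keys_add[of p q] pq(1) by simp
  ultimately show "Poly_Mapping.keys n \<subseteq> S \<union> T" by blast
qed

definition AllowF :: "nat \<Rightarrow> nat \<Rightarrow> var set" where
  "AllowF M M' = {X i | i. 1 \<le> i} \<union> {A i | i. 1 \<le> i \<and> i \<le> M} \<union> {B j | j. 1 \<le> j \<and> j \<le> M'}"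

lemma AllowF_mono: "M1 \<le> M2 \<Longrightarrow> M1' \<le> M2' \<Longrightarrow> AllowF M1 M1' \<subseteq> AllowF M2 M2'"
  unfolding AllowF_def by auto

lemma Kinf_supp:
  assumes "F \<in> K_inf"
  shows "\<exists>M M'. only_vars (AllowF M M') F"
proof -
  obtain n :: nat and f g h :: "nat \<Rightarrow> ser" where fgh: "\<forall>k<n. f k \<in> GGamma \<and> g k \<in> R_a \<and> h k \<in> R_b"
    and F: "F = (\<lambda>mm. \<Sum>k<n. ser_mul (ser_mul (f k) (g k)) (h k) mm)"
    using assms unfolding K_inf_def by blast
  have "\<forall>k. \<exists>M. k < n \<longrightarrow> only_vars {A i | i. 1 \<le> i \<and> i \<le> M} (g k)"
    using fgh unfolding R_a_def by blast
  from choice[OF this] obtain Ma where Ma0: "\<forall>k. k < n \<longrightarrow> only_vars {A i | i. 1 \<le> i \<and> i \<le> Ma k} (g k)"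
    by blast
  then have Ma: "\<And>k. k < n \<Longrightarrow> only_vars {A i | i. 1 \<le> i \<and> i \<le> Ma k} (g k)" by blast
  have "\<forall>k. \<exists>M. k < n \<longrightarrow> only_vars {B i | i. 1 \<le> i \<and> i \<le> M} (h k)"
    using fgh unfolding R_b_def by blast
  from choice[OF this] obtain Mb where Mb0: "\<forall>k. k < n \<longrightarrow> only_vars {B i | i. 1 \<le> i \<and> i \<le> Mb k} (h k)"
    by blast
  then have Mb: "\<And>k. k < n \<Longrightarrow> only_vars {B i | i. 1 \<le> i \<and> i \<le> Mb k} (h k)" by blast
  define M where "M = (\<Sum>k<n. Ma k)"
  define M' where "M' = (\<Sum>k<n. Mb k)"
  have trm: "only_vars (AllowF M M') (ser_mul (ser_mul (f k) (g k)) (h k))" if k: "k < n" for k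
  proof -
    have f: "only_vars {X i | i. i \<ge> 1} (f k)" using fgh k unfolding GGamma_def Ser_x_def by blast
    have "Ma k \<le> M" unfolding M_def by (rule member_le_sum) (use k in auto)
    moreover have "Mb k \<le> M'" unfolding M'_def by (rule member_le_sum) (use k in auto)
    ultimately have sub: "{X i | i. i \<ge> 1} \<union> {A i | i. 1 \<le> i \<and> i \<le> Ma k} \<union> {B i | i. 1 \<le> i \<and> i \<le> Mb k} \<subseteq> AllowF M M'"
      unfolding AllowF_def by auto
    show ?thesis
      by (rule only_vars_mono[OF only_vars_mul[OF only_vars_mul[OF f Ma[OF k]] Mb[OF k]] sub])
  qed
  have "only_vars (AllowF M M') F"
    unfolding only_vars_def
  proof (intro allI impI)
    fix mm assume "F mm \<noteq> 0"
    then obtain k where "k < n" "ser_mul (ser_mul (f k) (g k)) (h k) mm \<noteq> 0"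
      unfolding F by (auto elim!: sum.not_neutral_contains_not_neutral)
    then show "Poly_Mapping.keys mm \<subseteq> AllowF M M'" using trm unfolding only_vars_def by blast
  qed
  then show ?thesis by blast
qed

lemma Kinf_ren:
  assumes "F \<in> K_inf" "invol \<pi>" "\<pi> permutes {1..}"
  shows "F (ren \<pi> m) = F m"
proof -
  obtain n :: nat and f g h :: "nat \<Rightarrow> ser" where fgh: "\<forall>k<n. f k \<in> GGamma \<and> g k \<in> R_a \<and> h k \<in> R_b"
    and F: "F = (\<lambda>mm. \<Sum>k<n. ser_mul (ser_mul (f k) (g k)) (h k) mm)"
    using assms unfolding K_inf_def by blast
  have "ser_mul (ser_mul (f k) (g k)) (h k) (ren \<pi> m) = ser_mul (ser_mul (f k) (g k)) (h k) m" if k: "k < n" for k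
  proof -
    have fs: "subst (\<lambda>w. case w of X i \<Rightarrow> ser_var (X (\<pi> i)) | _ \<Rightarrow> ser_var w) (f k) = f k"
      using fgh k assms(3) unfolding GGamma_def symmetric_x_def by blast
    have f: "f k (ren \<pi> p) = f k p" for p by (rule sym_coeff[OF assms(2) fs])
    obtain Ma where "only_vars {A i | i. 1 \<le> i \<and> i \<le> Ma} (g k)"
      using fgh k unfolding R_a_def by blast
    then have g: "g k (ren \<pi> p) = g k p" for p by (rule only_vars_ren[OF assms(2)]) blast
    obtain Mb where "only_vars {B i | i. 1 \<le> i \<and> i \<le> Mb} (h k)"
      using fgh k unfolding R_b_def by blast
    then have h: "h k (ren \<pi> p) = h k p" for p by (rule only_vars_ren[OF assms(2)]) blast
    have fg: "ser_mul (f k) (g k) (ren \<pi> p) = ser_mul (f k) (g k) p" for p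
      by (rule ser_mul_ren[where f="f k" and g="g k", OF assms(2) f g])
    show ?thesis by (rule ser_mul_ren[where f="ser_mul (f k) (g k)" and g="h k", OF assms(2) fg h])
  qed
  then show ?thesis unfolding F by (intro sum.cong) auto
qed

lemma mdeg_eq:
  assumes "finite K" "Poly_Mapping.keys m \<subseteq> K"
  shows "mdeg m = (\<Sum>v\<in>K. Poly_Mapping.lookup m v)"
  unfolding mdeg_def
  by (rule sum.mono_neutral_left[OF assms(1) assms(2)]) (auto simp: in_keys_iff)

lemma mdeg_add: "mdeg (a + b) = mdeg a + mdeg b"
proof -
  let ?K = "Poly_Mapping.keys a \<union> Poly_Mapping.keys b"
  have "mdeg (a + b) = (\<Sum>v\<in>?K. Poly_Mapping.lookup (a + b) v)"
    by (rule mdeg_eq) (auto simp: keys_add)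
  also have "\<dots> = (\<Sum>v\<in>?K. Poly_Mapping.lookup a v) + (\<Sum>v\<in>?K. Poly_Mapping.lookup b v)"
    by (simp add: lookup_add sum.distrib)
  also have "\<dots> = mdeg a + mdeg b"
    using mdeg_eq[of ?K a] mdeg_eq[of ?K b] by simp
  finally show ?thesis .
qed

lemma mdeg_pos: "d \<noteq> 0 \<Longrightarrow> mdeg d > 0"
proof -
  assume "d \<noteq> 0"
  then obtain w where w: "w \<in> Poly_Mapping.keys d" by (metis keys_eq_empty ex_in_conv)
  have "Poly_Mapping.lookup d w \<le> mdeg d"
    unfolding mdeg_def using w by (intro member_le_sum) auto
  moreover have "Poly_Mapping.lookup d w > 0" using w by (simp add: in_keys_iff)
  ultimately show ?thesis by linarith
qed

lemma mdeg_zero: "mdeg 0 = 0"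
  by (simp add: mdeg_def)

lemma mdeg_single: "mdeg (Poly_Mapping.single w k) = k"
  by (simp add: mdeg_def)

lemma mdeg_sum: "finite Z \<Longrightarrow> mdeg (\<Sum>x\<in>Z. f x) = (\<Sum>x\<in>Z. mdeg (f x))"
  by (induction Z rule: finite_induct) (simp_all add: mdeg_zero mdeg_add)

lemma mdeg_ren: "mdeg (ren \<pi> m) = mdeg m"
proof -
  have "mdeg (ren \<pi> m) = (\<Sum>w\<in>Poly_Mapping.keys m. mdeg (Poly_Mapping.single (rho \<pi> w) (Poly_Mapping.lookup m w)))"
    unfolding ren_def by (rule mdeg_sum) simp
  also have "\<dots> = mdeg m" unfolding mdeg_single by (simp add: mdeg_def)
  finally show ?thesis .
qed

lemma Dn_mdeg_less: "m \<in> Dn m1 \<Longrightarrow> m \<noteq> m1 \<Longrightarrow> mdeg m < mdeg m1"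
proof -
  assume "m \<in> Dn m1" "m \<noteq> m1"
  then obtain d where d: "m1 = m + d" using Dn_iff by blast
  with \<open>m \<noteq> m1\<close> have "d \<noteq> 0" by auto
  then show ?thesis using d mdeg_add mdeg_pos by simp
qed



definition bs :: "nat \<Rightarrow> nat \<Rightarrow> nat" where
  "bs T i = (if 1 \<le> i \<and> i \<le> T then i + T else if T < i \<and> i \<le> 2 * T then i - T else i)"

lemma bs_invol: "invol (bs T)"
  unfolding invol_def
proof
  fix i show "bs T (bs T i) = i"
  proof (cases "1 \<le> i \<and> i \<le> T")
    case True
    then have e1: "bs T i = i + T" by (simp add: bs_def)
    have e2: "bs T (i + T) = i" using True by (simp add: bs_def)
    show ?thesis using e1 e2 by simp
  next
    case F1: False
    show ?thesis
    proof (cases "T < i \<and> i \<le> 2 * T")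
      case True
      define j where "j = i - T"
      have j: "i = j + T" "1 \<le> j" "j \<le> T" using True unfolding j_def by arith+
      have e1: "bs T i = j" using j by (simp add: bs_def)
      have e2: "bs T j = i" using j by (simp add: bs_def)
      show ?thesis using e1 e2 by simp
    next
      case False
      have e: "bs T i = i" unfolding bs_def using F1 False by (simp only: if_False)
      show ?thesis by (simp add: e)
    qed
  qed
qed

lemma bs_permutes: "bs T permutes {1..}"
  unfolding permutes_def
proof (intro conjI allI impI)
  fix x :: nat assume "x \<notin> {1..}"
  then have "x = 0" by simp
  then show "bs T x = x" by (simp add: bs_def)
next
  fix y show "\<exists>!x. bs T x = y"
    using bs_invol[of T] unfolding invol_def by metis
qed

definition vn :: "nat \<Rightarrow> nat \<Rightarrow> nat \<Rightarrow> int" where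
  "vn T M k = (if T < k \<and> k \<le> 2 * T then - int k
     else if 1 \<le> k \<and> k \<le> M then int (2 * T + k)
     else if 2 * T < k \<and> k \<le> 2 * T + M then int (k - 2 * T) else int k)"

definition vv :: "nat \<Rightarrow> nat \<Rightarrow> int \<Rightarrow> int" where
  "vv T M j = (if 0 \<le> j then vn T M (nat j) else - vn T M (nat (- j)))"

lemma vn_neg: "T < k \<Longrightarrow> k \<le> 2 * T \<Longrightarrow> vn T M k = - int k"
  by (simp add: vn_def)

lemma vn_pos:
  assumes "M < T" "\<not> (T < k \<and> k \<le> 2 * T)"
  shows "vn T M k \<ge> 0 \<and> vn T M (nat (vn T M k)) = int k \<and> (vn T M k = 0 \<longleftrightarrow> k = 0)"
proof (cases "1 \<le> k \<and> k \<le> M")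
  case True
  then have "vn T M k = int (2 * T + k)" using assms by (simp add: vn_def)
  moreover have "vn T M (2 * T + k) = int k" using True assms by (simp add: vn_def)
  moreover have "nat (vn T M k) = 2 * T + k" using \<open>vn T M k = int (2 * T + k)\<close> by (simp only: nat_int)
  ultimately show ?thesis using True by simp
next
  case F1: False
  show ?thesis
  proof (cases "2 * T < k \<and> k \<le> 2 * T + M")
    case True
    then have "vn T M k = int (k - 2 * T)" using assms F1 by (simp add: vn_def)
    moreover have "vn T M (k - 2 * T) = int k"
    proof -
      define j where "j = k - 2 * T"
      have j: "k = 2 * T + j" "1 \<le> j" "j \<le> M" using True unfolding j_def by arith+
      then have "k - 2 * T = j" by simp
      moreover have "vn T M j = int (2 * T + j)" using j assms by (simp add: vn_def)
      ultimately show ?thesis using j by simp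
    qed
    moreover have "nat (vn T M k) = k - 2 * T" using \<open>vn T M k = int (k - 2 * T)\<close> by (simp only: nat_int)
    ultimately show ?thesis using True by simp
  next
    case False
    then have "vn T M k = int k" using assms F1 by (simp add: vn_def)
    then show ?thesis by simp
  qed
qed

lemma vn_zero: "vn T M 0 = 0"
  by (simp add: vn_def)

lemma vv_odd: "vv T M (- j) = - vv T M j"
proof (cases "j = 0")
  case True then show ?thesis by (simp add: vv_def vn_zero)
next
  case False
  show ?thesis
  proof (cases "0 < j")
    case True then show ?thesis by (simp add: vv_def)
  next
    case False
    with \<open>j \<noteq> 0\<close> have "j < 0" by simp
    then show ?thesis by (simp add: vv_def)
  qed
qed

lemma vv_invol_pos:
  assumes "M < T" "0 \<le> j"
  shows "vv T M (vv T M j) = j"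
proof (cases "T < nat j \<and> nat j \<le> 2 * T")
  case True
  then have "vv T M j = - j" using assms by (simp add: vv_def vn_neg vn_zero)
  moreover have "vv T M (- j) = j" using True assms by (simp add: vv_def vn_neg vn_zero)
  ultimately show ?thesis by simp
next
  case False
  from vn_pos[OF assms(1) False]
  have "vn T M (nat j) \<ge> 0" "vn T M (nat (vn T M (nat j))) = int (nat j)" by auto
  then show ?thesis using assms by (simp add: vv_def)
qed

lemma vv_invol:
  assumes "M < T"
  shows "vv T M (vv T M j) = j"
proof (cases "0 \<le> j")
  case True then show ?thesis using vv_invol_pos[OF assms] by simp
next
  case False
  then have "vv T M (vv T M (- j)) = - j" using vv_invol_pos[OF assms, of "- j"] by simp
  then show ?thesis by (metis vv_odd minus_minus)
qed

lemma vv_zero_iff: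
  assumes "M < T"
  shows "vv T M j = 0 \<longleftrightarrow> j = 0"
proof
  assume "vv T M j = 0"
  then have "vv T M (vv T M j) = vv T M 0" by simp
  then show "j = 0" using vv_invol[OF assms] vv_odd[of T M 0] by simp
next
  assume "j = 0" then show "vv T M j = 0" by (simp add: vv_def vn_zero)
qed

lemma vn_far: "2 * T + M < k \<Longrightarrow> vn T M k = int k"
  unfolding vn_def by simp

lemma vv_far:
  assumes "2 * T + M < nat \<bar>j\<bar>"
  shows "vv T M j = j"
proof (cases "0 \<le> j")
  case True
  then have "2 * T + M < nat j" using assms by simp
  then show ?thesis using True by (simp add: vv_def vn_far)
next
  case False
  then have "2 * T + M < nat (- j)" using assms by simp
  then show ?thesis using False by (simp add: vv_def vn_far)
qed

lemma vv_W:
  assumes "M < T"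
  shows "vv T M \<in> W_inf"
  unfolding W_inf_def
proof (intro CollectI conjI allI)
  show "bij_betw (vv T M) (- {0}) (- {0})"
    unfolding bij_betw_def
  proof
    show "inj_on (vv T M) (- {0})"
    proof (rule inj_onI)
      fix a b assume "vv T M a = vv T M b"
      then have "vv T M (vv T M a) = vv T M (vv T M b)" by simp
      then show "a = b" by (simp add: vv_invol[OF assms])
    qed
    show "vv T M ` (- {0}) = - {0}"
    proof
      show "vv T M ` (- {0}) \<subseteq> - {0}"
      proof
        fix y assume "y \<in> vv T M ` (- {0})"
        then obtain x where x: "x \<noteq> 0" "y = vv T M x" by blast
        then show "y \<in> - {0}" using vv_zero_iff[OF assms, of x] by simp
      qed
      show "- {0} \<subseteq> vv T M ` (- {0})"
      proof
        fix y :: int assume "y \<in> - {0}"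
        then have "vv T M y \<in> - {0}" using vv_zero_iff[OF assms, of y] by simp
        moreover have "y = vv T M (vv T M y)" using vv_invol[OF assms] by simp
        ultimately show "y \<in> vv T M ` (- {0})" by blast
      qed
    qed
  qed
  have "{i. vv T M i \<noteq> i} \<subseteq> {- int (2 * T + M) .. int (2 * T + M)}"
  proof
    fix i assume "i \<in> {i. vv T M i \<noteq> i}"
    then have "\<not> (2 * T + M < nat \<bar>i\<bar>)" using vv_far by blast
    then have ab: "\<bar>i\<bar> \<le> int (2 * T + M)" by linarith
    show "i \<in> {- int (2 * T + M) .. int (2 * T + M)}" unfolding atLeastAtMost_iff using ab by arith
  qed
  then show "finite {i. vv T M i \<noteq> i}" by (rule finite_subset) simp
next
  fix i show "vv T M (- i) = - vv T M i" by (rule vv_odd)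
qed



lemma vv_pos_int: "vv T M (int i) = vn T M i"
  by (simp add: vv_def)

lemma PX: "T < i \<Longrightarrow> i \<le> 2 * T \<Longrightarrow> Phi_assign (vv T M) (X i) = ubar (B i)"
  by (simp add: Phi_assign_def vv_pos_int vn_neg bvar_def)

lemma PX0: "M < T \<Longrightarrow> \<not> (T < i \<and> i \<le> 2 * T) \<Longrightarrow> Phi_assign (vv T M) (X i) = ser_zero"
  using vn_pos[of M T i] by (simp add: Phi_assign_def vv_pos_int)

lemma PA: "M < T \<Longrightarrow> 1 \<le> i \<Longrightarrow> i \<le> M \<Longrightarrow> Phi_assign (vv T M) (A i) = ubar (B (2 * T + i))"
proof -
  assume a: "M < T" "1 \<le> i" "i \<le> M"
  then have e: "vn T M i = int (2 * T + i)" by (simp add: vn_def)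
  have b: "bbar (int k) = ubar (B k)" if "0 < k" for k using that by (simp add: bbar_def)
  have "Phi_assign (vv T M) (A i) = bbar (vn T M i)" by (simp add: Phi_assign_def vv_pos_int)
  also have "\<dots> = ubar (B (2 * T + i))" unfolding e using a by (intro b) simp
  finally show ?thesis .
qed

lemma PB: "Phi_assign v (B j) = ser_var (B j)"
  by (simp add: Phi_assign_def)

definition Allow2 :: "nat \<Rightarrow> nat \<Rightarrow> nat \<Rightarrow> var set" where
  "Allow2 T M M' = {X i | i. T < i \<and> i \<le> 2 * T} \<union> {A i | i. 1 \<le> i \<and> i \<le> M} \<union> {B j | j. 1 \<le> j \<and> j \<le> M'}"

definition tau :: "nat \<Rightarrow> var \<Rightarrow> var" where
  "tau T w = (case w of X i \<Rightarrow> B i | A i \<Rightarrow> B (2 * T + i) | B j \<Rightarrow> B j)"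

definition cw :: "var \<Rightarrow> rat poly" where
  "cw w = (case w of B j \<Rightarrow> 1 | _ \<Rightarrow> - 1)"

lemma lowAll:
  assumes "M < T" "w \<in> Allow2 T M M'"
  shows "lowC UNIV (Phi_assign (vv T M) w) (Poly_Mapping.single (tau T w) 1) (cw w)"
proof -
  have U: "addcl UNIV" by (simp add: addcl_def)
  consider (x) i where "w = X i" "T < i" "i \<le> 2 * T" | (a) i where "w = A i" "1 \<le> i" "i \<le> M"
    | (b) j where "w = B j"
    using assms(2) unfolding Allow2_def by blast
  then show ?thesis
  proof cases
    case x then show ?thesis using lowC_ubar[of "B i"] by (simp add: PX tau_def cw_def)
  next
    case a then show ?thesis using lowC_ubar[of "B (2 * T + i)"] assms(1) by (simp add: PA tau_def cw_def)
  next
    case b then show ?thesis using lowC_var[OF U, of "B j"] by (simp add: PB tau_def cw_def)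
  qed
qed

lemma cw_nz: "cw w \<noteq> 0"
  by (cases w) (auto simp: cw_def)

lemma tau_inj:
  assumes "M' < T" "w1 \<in> Allow2 T M M'" "w2 \<in> Allow2 T M M'" "tau T w1 = tau T w2"
  shows "w1 = w2"
proof -
  have k: "w \<in> Allow2 T M M' \<Longrightarrow> (\<exists>i. w = X i \<and> T < i \<and> i \<le> 2 * T) \<or> (\<exists>i. w = A i \<and> 1 \<le> i) \<or> (\<exists>j. w = B j \<and> j \<le> M')" for w
    unfolding Allow2_def by blast
  from k[OF assms(2)] k[OF assms(3)] assms(1,4) show ?thesis
    by (auto simp: tau_def)
qed

definition mu :: "nat \<Rightarrow> mon \<Rightarrow> mon" where
  "mu T m = (\<Sum>w\<in>Poly_Mapping.keys m. Poly_Mapping.single (tau T w) (Poly_Mapping.lookup m w))"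

lemma lookup_mu:
  assumes "M' < T" "Poly_Mapping.keys m \<subseteq> Allow2 T M M'" "w0 \<in> Allow2 T M M'"
  shows "Poly_Mapping.lookup (mu T m) (tau T w0) = Poly_Mapping.lookup m w0"
proof -
  have "Poly_Mapping.lookup (mu T m) (tau T w0) = (\<Sum>w\<in>Poly_Mapping.keys m. if w = w0 then Poly_Mapping.lookup m w else 0)"
    unfolding mu_def lookup_sum
  proof (rule sum.cong[OF refl])
    fix w assume w: "w \<in> Poly_Mapping.keys m"
    have "tau T w = tau T w0 \<longleftrightarrow> w = w0"
      using tau_inj[OF assms(1) _ assms(3)] w assms(2) by blast
    then show "Poly_Mapping.lookup (Poly_Mapping.single (tau T w) (Poly_Mapping.lookup m w)) (tau T w0) =
        (if w = w0 then Poly_Mapping.lookup m w else 0)"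
      by (simp add: lookup_single when_def)
  qed
  also have "\<dots> = Poly_Mapping.lookup m w0"
    by (simp add: in_keys_iff)
  finally show ?thesis .
qed



lemma AllowF_X: "X i \<in> AllowF M M' \<Longrightarrow> 1 \<le> i"
  unfolding AllowF_def by blast

lemma AllowF_A: "A i \<in> AllowF M M' \<Longrightarrow> 1 \<le> i \<and> i \<le> M"
  unfolding AllowF_def by blast

lemma AllowF_B: "B j \<in> AllowF M M' \<Longrightarrow> 1 \<le> j \<and> j \<le> M'"
  unfolding AllowF_def by blast

lemma core:
  assumes F: "F \<in> K_inf" and G: "G \<in> K_inf" and eq: "\<And>v. v \<in> W_inf \<Longrightarrow> Phi v F = Phi v G"
  shows "F = G"
proof (rule ccontr)
  assume ne: "F \<noteq> G"
  obtain M1 M1' where oF: "only_vars (AllowF M1 M1') F" using Kinf_supp[OF F] by blast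
  obtain M2 M2' where oG: "only_vars (AllowF M2 M2') G" using Kinf_supp[OF G] by blast
  define M where "M = M1 + M2"
  define M' where "M' = M1' + M2'"
  have oF': "only_vars (AllowF M M') F"
    by (rule only_vars_mono[OF oF AllowF_mono]) (simp_all add: M_def M'_def)
  have oG': "only_vars (AllowF M M') G"
    by (rule only_vars_mono[OF oG AllowF_mono]) (simp_all add: M_def M'_def)
  define D where "D = (\<lambda>m. F m - G m)"
  obtain mx where "F mx \<noteq> G mx" using ne by (meson ext)
  then have "D mx \<noteq> 0" by (simp add: D_def)
  then obtain m0 where m0: "D m0 \<noteq> 0" and min0: "\<And>m. D m \<noteq> 0 \<Longrightarrow> mdeg m0 \<le> mdeg m"
    using ex_has_least_nat[of "\<lambda>m. D m \<noteq> 0" mx mdeg] by blast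
  have DF: "Poly_Mapping.keys m \<subseteq> AllowF M M'" if "F m \<noteq> 0 \<or> G m \<noteq> 0" for m
    using that oF' oG' unfolding only_vars_def by blast
  have DD: "F m \<noteq> 0 \<or> G m \<noteq> 0" if "D m \<noteq> 0" for m
    using that by (auto simp: D_def)
  define S0 where "S0 = X -` Poly_Mapping.keys m0"
  have finS0: "finite S0" unfolding S0_def
    by (rule finite_vimageI[OF finite_keys]) (simp add: inj_def)
  have S0b: "1 \<le> i" if "i \<in> S0" for i
    using that DF[OF DD[OF m0]] AllowF_X unfolding S0_def by blast
  define T where "T = M + M' + sum id S0 + 1"
  have MT: "M < T" "M' < T" unfolding T_def by simp_all
  have S0T: "i \<le> T" if "i \<in> S0" for i
  proof -
    have "id i \<le> sum id S0" by (rule member_le_sum[OF that _ finS0]) simp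
    then show ?thesis unfolding T_def by simp
  qed
  define \<pi> where "\<pi> = bs T"
  have inv: "invol \<pi>" unfolding \<pi>_def by (rule bs_invol)
  have perm: "\<pi> permutes {1..}" unfolding \<pi>_def by (rule bs_permutes)
  define m1 where "m1 = ren \<pi> m0"
  have Dren: "D (ren \<pi> m) = D m" for m
    unfolding D_def using Kinf_ren[OF F inv perm] Kinf_ren[OF G inv perm] by simp
  have m1nz: "D m1 \<noteq> 0" unfolding m1_def Dren by (rule m0)
  have min1: "mdeg m1 \<le> mdeg m" if "D m \<noteq> 0" for m
    unfolding m1_def mdeg_ren using min0[OF that] .
  have keys1: "Poly_Mapping.keys m1 \<subseteq> Allow2 T M M'"
  proof
    fix w assume w: "w \<in> Poly_Mapping.keys m1"
    have w0: "rho \<pi> w \<in> Poly_Mapping.keys m0"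
      using w unfolding m1_def in_keys_iff lookup_ren[OF inv] .
    have wF: "w \<in> AllowF M M'" using w DF[OF DD[OF m1nz]] by blast
    show "w \<in> Allow2 T M M'"
    proof (cases w)
      case (X i)
      then have "\<pi> i \<in> S0" using w0 unfolding S0_def by (simp add: rho_def)
      then have r: "1 \<le> \<pi> i" "\<pi> i \<le> T" using S0b S0T by auto
      then have "\<pi> (\<pi> i) = \<pi> i + T" unfolding \<pi>_def by (simp add: bs_def)
      then have "i = \<pi> i + T" using inv unfolding invol_def by simp
      then have "T < i \<and> i \<le> 2 * T" using r by simp
      then show ?thesis using X unfolding Allow2_def by blast
    next
      case (A i)
      then show ?thesis using wF AllowF_A unfolding Allow2_def by blast
    next
      case (B j)
      then show ?thesis using wF AllowF_B unfolding Allow2_def by blast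
    qed
  qed
  define v where "v = vv T M"
  have vW: "v \<in> W_inf" unfolding v_def by (rule vv_W[OF MT(1)])
  define \<sigma> where "\<sigma> = Phi_assign v"
  define n0 where "n0 = mu T m1"
  have lowm: "lowC UNIV (mono_img \<sigma> m) (mu T m) (\<Prod>w\<in>Poly_Mapping.keys m. cw w ^ Poly_Mapping.lookup m w)"
    if "Poly_Mapping.keys m \<subseteq> Allow2 T M M'" for m
    unfolding mu_def \<sigma>_def v_def
    by (rule mono_img_low) (use that lowAll[OF MT(1)] in \<open>auto simp: addcl_def\<close>)
  have contrib: "m \<in> Dn m1" if nz: "F m \<noteq> 0 \<or> G m \<noteq> 0" and im: "mono_img \<sigma> m n0 \<noteq> 0" for m
  proof -
    have kF: "Poly_Mapping.keys m \<subseteq> AllowF M M'" by (rule DF[OF nz])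
    have k2: "Poly_Mapping.keys m \<subseteq> Allow2 T M M'"
    proof
      fix w assume w: "w \<in> Poly_Mapping.keys m"
      have wF: "w \<in> AllowF M M'" using w kF by blast
      show "w \<in> Allow2 T M M'"
      proof (cases w)
        case (X i)
        show ?thesis
        proof (cases "T < i \<and> i \<le> 2 * T")
          case True then show ?thesis using X unfolding Allow2_def by blast
        next
          case False
          then have "\<sigma> w = ser_zero" unfolding \<sigma>_def v_def X by (rule PX0[OF MT(1)])
          then have "mono_img \<sigma> m = ser_zero" by (rule mono_img_zero[OF w])
          then show ?thesis using im by (simp add: ser_zero_def)
        qed
      next
        case (A i)
        then show ?thesis using wF AllowF_A unfolding Allow2_def by blast
      next
        case (B j)
        then show ?thesis using wF AllowF_B unfolding Allow2_def by blast
      qed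
    qed
    obtain d where d: "n0 = mu T m + d"
      using lowm[OF k2] im unfolding lowC_def by blast
    show "m \<in> Dn m1" unfolding Dn_def
    proof (intro CollectI allI)
      fix k show "Poly_Mapping.lookup m k \<le> Poly_Mapping.lookup m1 k"
      proof (cases "k \<in> Allow2 T M M'")
        case True
        have "Poly_Mapping.lookup m k = Poly_Mapping.lookup (mu T m) (tau T k)"
          by (rule lookup_mu[OF MT(2) k2 True, symmetric])
        also have "\<dots> \<le> Poly_Mapping.lookup n0 (tau T k)" unfolding d by (simp add: lookup_add)
        also have "\<dots> = Poly_Mapping.lookup m1 k" unfolding n0_def by (rule lookup_mu[OF MT(2) keys1 True])
        finally show ?thesis .
      next
        case False
        then have "k \<notin> Poly_Mapping.keys m" using k2 by blast
        then show ?thesis by (simp add: in_keys_iff)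
      qed
    qed
  qed
  have val: "mono_img \<sigma> m1 n0 \<noteq> 0"
  proof -
    have "mono_img \<sigma> m1 n0 = (\<Prod>w\<in>Poly_Mapping.keys m1. cw w ^ Poly_Mapping.lookup m1 w)"
      using lowm[OF keys1] unfolding lowC_def n0_def by blast
    also have "\<dots> \<noteq> 0" by (simp add: cw_nz)
    finally show ?thesis .
  qed
  have sumX: "Phi v H n0 = (\<Sum>m\<in>Dn m1. H m * mono_img \<sigma> m n0)"
    if H: "\<And>m. H m \<noteq> 0 \<Longrightarrow> F m \<noteq> 0 \<or> G m \<noteq> 0" for H
  proof -
    have "Phi v H n0 = (\<Sum>m\<in>{m. H m \<noteq> 0 \<and> mono_img \<sigma> m n0 \<noteq> 0}. H m * mono_img \<sigma> m n0)"
      by (simp add: Phi_def subst_def \<sigma>_def)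
    also have "\<dots> = (\<Sum>m\<in>Dn m1. H m * mono_img \<sigma> m n0)"
    proof (rule sum.mono_neutral_left[OF finite_Dn])
      show "{m. H m \<noteq> 0 \<and> mono_img \<sigma> m n0 \<noteq> 0} \<subseteq> Dn m1"
        using contrib H by blast
      show "\<forall>i\<in>Dn m1 - {m. H m \<noteq> 0 \<and> mono_img \<sigma> m n0 \<noteq> 0}. H i * mono_img \<sigma> i n0 = 0"
        by auto
    qed
    finally show ?thesis .
  qed
  have sF: "Phi v F n0 = (\<Sum>m\<in>Dn m1. F m * mono_img \<sigma> m n0)" by (rule sumX) blast
  have sG: "Phi v G n0 = (\<Sum>m\<in>Dn m1. G m * mono_img \<sigma> m n0)" by (rule sumX) blast
  have m1in: "m1 \<in> Dn m1" unfolding Dn_iff by (intro exI[of _ 0]) simp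
  have "Phi v F n0 - Phi v G n0 = (\<Sum>m\<in>Dn m1. D m * mono_img \<sigma> m n0)"
    unfolding sF sG D_def by (simp add: sum_subtractf[symmetric] left_diff_distrib)
  also have "\<dots> = D m1 * mono_img \<sigma> m1 n0 + (\<Sum>m\<in>Dn m1 - {m1}. D m * mono_img \<sigma> m n0)"
    by (rule sum.remove[OF finite_Dn m1in])
  also have "(\<Sum>m\<in>Dn m1 - {m1}. D m * mono_img \<sigma> m n0) = 0"
  proof (rule sum.neutral, rule ballI)
    fix m assume m: "m \<in> Dn m1 - {m1}"
    then have "mdeg m < mdeg m1" using Dn_mdeg_less by blast
    then have "D m = 0" using min1[of m] by linarith
    then show "D m * mono_img \<sigma> m n0 = 0" by simp
  qed
  finally have "Phi v F n0 - Phi v G n0 = D m1 * mono_img \<sigma> m1 n0" by simp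
  moreover have "D m1 * mono_img \<sigma> m1 n0 \<noteq> 0" using m1nz val by simp
  moreover have "Phi v F n0 - Phi v G n0 = 0" using eq[OF vW] by simp
  ultimately show False by simp
qed

theorem lemma8p6:
  shows "inj_on (\<lambda>F. restrict (\<lambda>v. Phi v F) W_inf) K_inf"
proof (rule inj_onI)
  fix F G assume F: "F \<in> K_inf" and G: "G \<in> K_inf"
    and e: "restrict (\<lambda>v. Phi v F) W_inf = restrict (\<lambda>v. Phi v G) W_inf"
  show "F = G"
  proof (rule core[OF F G])
    fix v assume v: "v \<in> W_inf"
    have "restrict (\<lambda>v. Phi v F) W_inf v = restrict (\<lambda>v. Phi v G) W_inf v" using e by simp
    then show "Phi v F = Phi v G" using v by simp
  qed
qed

end
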